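(* For integers $s,t\ge 0$ define $$m_{i,j}^{s,t}=\int_{(0,1)^2}\frac{x^{s+i}y^{s+j}}{x+y}\left(\frac{1-x}{1+x}\right)^t\left(\frac{1-y}{1+y}\right)^t\,dx\,dy\qquad(i,j\ge 0),$$ and $\tau_n^{s,t}=\det\big(m_{i,j}^{s,t}\big)_{i,j=0}^{n-1}$ for $n\ge 1$, with $\tau_0^{s,t}=1$. Then for all integers $n\ge 1$ and $s,t\ge 0$, the quantities $\tau_n^{s,t}$ satisfy the discrete CKP equation $$ \begin{aligned} &4\left(\tau_{n}^{s+1,t}\tau_n^{s,t}-\tau_{n+1}^{s,t}\tau_{n-1}^{s+1,t}\right)\left(\tau_n^{s+1,t+1}\tau_n^{s,t+1}-\tau_{n+1}^{s,t+1}\tau_{n-1}^{s+1,t+1}\right)\\ &\qquad=\left(\tau_n^{s+1,t}\tau_n^{s,t+1}+\tau_n^{s+1,t+1}\tau_n^{s,t}-\tau_{n+1}^{s,t+1}\tau_{n-1}^{s+1,t}-\tau_{n+1}^{s,t}\tau_{n-1}^{s+1,t+1}\right)^2. \end{aligned} $$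
   Context: The numbers $\tau_n^{s,t}$ are the normalization factors (Gram determinants of bi-moments) of the Cauchy bi-orthogonal polynomials with the deformed Jacobi weight $x^s\big((1-x)/(1+x)\big)^t$ on $(0,1)$ and Cauchy kernel $1/(x+y)$. The empty determinant $\tau_0^{s,t}$ is taken to be $1$. *)

theory Defs
  imports "HOL-Analysis.Analysis"
begin

definition moment :: "nat \<Rightarrow> nat \<Rightarrow> nat \<Rightarrow> nat \<Rightarrow> real" where
  "moment s t i j =
     (LINT z:{0<..<1} \<times> {0<..<1} | (lborel :: (real \<times> real) measure).
        (fst z) ^ (s + i) * (snd z) ^ (s + j) / (fst z + snd z)
        * ((1 - fst z) / (1 + fst z)) ^ t * ((1 - snd z) / (1 + snd z)) ^ t)"

definition detn :: "nat \<Rightarrow> (nat \<Rightarrow> nat \<Rightarrow> real) \<Rightarrow> real" where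
  "detn n A = (\<Sum>p | p permutes {..<n}. of_int (sign p) * (\<Prod>i<n. A i (p i)))"

definition tau :: "nat \<Rightarrow> nat \<Rightarrow> nat \<Rightarrow> real" where
  "tau n s t = detn n (moment s t)"

lemma tau_0: "tau 0 s t = 1"
  by (simp add: tau_def detn_def)

end

theory Submission
  imports Defs "Jordan_Normal_Form.Determinant" "Jordan_Normal_Form.Char_Poly"
begin

lemma prod_integrable_integral:
  fixes f g :: "real \<Rightarrow> real"
  assumes f: "integrable lborel f" and g: "integrable lborel g"
  shows "integrable (lborel :: (real \<times> real) measure) (\<lambda>z. f (fst z) * g (snd z))"
    and "lebesgue_integral (lborel :: (real \<times> real) measure) (\<lambda>z. f (fst z) * g (snd z)) = lebesgue_integral lborel f * lebesgue_integral lborel g"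
proof -

  have fm[measurable]: "f \<in> borel_measurable borel" using borel_measurable_integrable[OF f] by simp
  have gm[measurable]: "g \<in> borel_measurable borel" using borel_measurable_integrable[OF g] by simp
  have I: "integrable (lborel \<Otimes>\<^sub>M lborel) (\<lambda>z::real\<times>real. f (fst z) * g (snd z))"
  proof (rule lborel_pair.Fubini_integrable)
    show "(\<lambda>z::real\<times>real. f (fst z) * g (snd z)) \<in> borel_measurable (lborel \<Otimes>\<^sub>M lborel)" by measurable
    have "(\<lambda>x. \<integral>y. norm (f (fst (x, y)) * g (snd (x, y))) \<partial>lborel) = (\<lambda>x. \<bar>f x\<bar> * (\<integral>y. \<bar>g y\<bar> \<partial>lborel))"
      by (simp add: abs_mult)
    moreover have "integrable lborel (\<lambda>x. \<bar>f x\<bar> * (\<integral>y. \<bar>g y\<bar> \<partial>lborel))"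
      using f by (intro integrable_mult_left) (rule integrable_abs)
    ultimately show "integrable lborel (\<lambda>x. \<integral>y. norm (f (fst (x, y)) * g (snd (x, y))) \<partial>lborel)" by simp
    show "AE x in lborel. integrable lborel (\<lambda>y. f (fst (x, y)) * g (snd (x, y)))"
      using g by (intro AE_I2) (simp add: integrable_mult_right)
  qed
  thus "integrable (lborel :: (real \<times> real) measure) (\<lambda>z. f (fst z) * g (snd z))"
    by (simp add: lborel_prod)
  have "lebesgue_integral (lborel \<Otimes>\<^sub>M lborel) (\<lambda>z::real\<times>real. f (fst z) * g (snd z)) = (\<integral>x. (\<integral>y. f x * g y \<partial>lborel) \<partial>lborel)"
    using lborel_pair.integral_fst'[OF I] by simp
  also have "\<dots> = lebesgue_integral lborel f * lebesgue_integral lborel g" by simp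
  finally show "lebesgue_integral (lborel :: (real \<times> real) measure) (\<lambda>z. f (fst z) * g (snd z)) = lebesgue_integral lborel f * lebesgue_integral lborel g"
    by (simp add: lborel_prod)
qed

definition Qf :: "real \<Rightarrow> real" where "Qf x = indicator {0<..1} x * x powr (-1/2::real)"

lemma Qf_integrable: "integrable lborel Qf"
proof -
  have "(\<lambda>x::real. x powr (-1/2::real)) integrable_on {0<..1}"
    by (rule integrable_on_powr_from_0') auto
  hence "(\<lambda>x::real. x powr (-1/2::real)) absolutely_integrable_on {0<..1}"
    by (rule nonnegative_absolutely_integrable_1) auto
  hence "integrable lebesgue (\<lambda>x. indicator {0<..1} x *\<^sub>R x powr (-1/2::real))"
    unfolding set_integrable_def .
  moreover have "(\<lambda>x::real. indicator {0<..1} x *\<^sub>R x powr (-1/2::real)) \<in> borel_measurable lborel"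
    unfolding measurable_lborel2 by (rule borel_measurable_continuous_on_indicator) (auto intro!: continuous_intros)
  ultimately have "integrable lborel (\<lambda>x. indicator {0<..1} x *\<^sub>R x powr (-1/2::real))"
    using integrable_completion by blast
  thus ?thesis unfolding Qf_def by simp
qed

definition gm :: "nat \<Rightarrow> nat \<Rightarrow> nat \<Rightarrow> real" where
  "gm s t i = (LINT x:{0<..<1}|lborel. x ^ (s+i) * ((1 - x) / (1 + x)) ^ t / (1 + x))"

lemma core1:
  fixes x y :: real assumes "x > 0" "y > 0"
  shows "(1 - x) / (1 + x) * ((1 - y) / (1 + y)) / (x + y) = 1 / (x + y) - 2 / ((1 + x) * (1 + y))"
proof -
  have nz: "x + y \<noteq> 0" "1 + x \<noteq> 0" "1 + y \<noteq> 0" using assms by auto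
  show ?thesis using nz by (simp add: divide_simps) (simp add: algebra_simps)
qed
lemma key_alg2:
  fixes x y xa yb wx wy :: real assumes "x > 0" "y > 0"
  shows "xa * yb / (x + y) * ((1 - x) / (1 + x) * wx) * ((1 - y) / (1 + y) * wy)
       = xa * yb / (x + y) * wx * wy + (-2) * (xa * wx / (1 + x) * (yb * wy / (1 + y)))"
proof -
  have "xa * yb / (x + y) * ((1 - x) / (1 + x) * wx) * ((1 - y) / (1 + y) * wy)
      = xa * yb * wx * wy * ((1 - x) / (1 + x) * ((1 - y) / (1 + y)) / (x + y))" by (simp add: ac_simps)
  also have "\<dots> = xa * yb * wx * wy * (1 / (x + y) - 2 / ((1 + x) * (1 + y)))" using core1[OF assms] by simp
  also have "\<dots> = xa * yb / (x + y) * wx * wy + (-2) * (xa * wx / (1 + x) * (yb * wy / (1 + y)))"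
    by (simp add: algebra_simps)
  finally show ?thesis .
qed

lemma inv_le_powr:
  fixes x y :: real
  assumes "0 < x" "0 < y"
  shows "1 / (x + y) \<le> x powr (-1/2) * y powr (-1/2)"
proof -
  have sx: "x powr (-1/2) = 1 / sqrt x" using assms by (simp add: powr_minus_divide powr_half_sqrt)
  have sy: "y powr (-1/2) = 1 / sqrt y" using assms by (simp add: powr_minus_divide powr_half_sqrt)
  have "sqrt x * sqrt y = sqrt (x * y)" by (simp add: real_sqrt_mult)
  also have "\<dots> \<le> sqrt ((x + y)^2)" using assms by (intro real_sqrt_le_mono) (simp add: power2_eq_square algebra_simps)
  also have "\<dots> = x + y" using assms by simp
  finally have le: "sqrt x * sqrt y \<le> x + y" .
  have "1 / (x + y) \<le> 1 / (sqrt x * sqrt y)" using assms le by (intro divide_left_mono) auto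
  thus ?thesis unfolding sx sy by simp
qed

lemma moment_step: "moment s (Suc t) i j = moment s t i j + (-2) * gm s t i * gm s t j"
proof -
  define A where "A = {0<..<1::real}"
  define a where "a = s + i"
  define b where "b = s + j"
  define h where "h = (\<lambda>a (x::real). indicator A x * (x ^ a * ((1 - x) / (1 + x)) ^ t / (1 + x)))"
  define ft where "ft = (\<lambda>t (z::real\<times>real). indicator (A \<times> A) z * (fst z ^ a * snd z ^ b / (fst z + snd z) * ((1 - fst z) / (1 + fst z)) ^ t * ((1 - snd z) / (1 + snd z)) ^ t))"
  have m: "moment s t' i j = lebesgue_integral lborel (ft t')" for t'
    unfolding moment_def set_lebesgue_integral_def ft_def A_def a_def b_def by simp
  have g: "gm s t i' = lebesgue_integral lborel (h (s + i'))" for i'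
    unfolding gm_def set_lebesgue_integral_def h_def A_def by simp
  have pw: "ft (Suc t) z = ft t z + (-2) * (h a (fst z) * h b (snd z))" for z
  proof (cases z)
    case (Pair x y)
    show ?thesis
    proof (cases "x \<in> A \<and> y \<in> A")
      case True
      hence "x > 0" "y > 0" unfolding A_def by auto
      have i1: "indicator (A \<times> A) (x, y) = (1::real)" "indicator A x = (1::real)" "indicator A y = (1::real)"
        using True by (auto simp: indicator_def)
      show ?thesis unfolding Pair ft_def h_def i1 fst_conv snd_conv mult_1_left power_Suc
        by (rule key_alg2) fact+
    next
      case False
      thus ?thesis unfolding ft_def h_def Pair by (auto simp: indicator_def)
    qed
  qed
  have hint: "integrable lborel (h a')" for a'
  proof -
    have "set_integrable lborel {0..1} (\<lambda>x::real. x ^ a' * ((1 - x) / (1 + x)) ^ t / (1 + x))"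
      by (rule borel_integrable_atLeastAtMost') (auto intro!: continuous_intros)
    hence "set_integrable lborel A (\<lambda>x::real. x ^ a' * ((1 - x) / (1 + x)) ^ t / (1 + x))"
      by (rule set_integrable_subset) (auto simp: A_def)
    thus ?thesis unfolding set_integrable_def h_def by simp
  qed
  note PI = prod_integrable_integral[OF hint[of a] hint[of b]]
  have AA[measurable]: "A \<times> A \<in> sets (borel :: (real \<times> real) measure)"
    unfolding A_def by (rule borel_open) (auto intro: open_Times)
  have ftint: "integrable lborel (ft t)"
  proof (rule Bochner_Integration.integrable_bound)
    show "integrable (lborel :: (real \<times> real) measure) (\<lambda>z. Qf (fst z) * Qf (snd z))"
      by (rule prod_integrable_integral(1)[OF Qf_integrable Qf_integrable])
    show "ft t \<in> borel_measurable lborel"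
    proof -
      have "(\<lambda>z. indicator (A \<times> A) z *\<^sub>R (fst z ^ a * snd z ^ b / (fst z + snd z) * ((1 - fst z) / (1 + fst z)) ^ t * ((1 - snd z) / (1 + snd z)) ^ t)) \<in> borel_measurable borel"
        by (rule borel_measurable_continuous_on_indicator[OF AA]) (auto simp: A_def mem_Times_iff intro!: continuous_intros add_pos_pos)
      thus ?thesis unfolding ft_def by simp
    qed
    show "AE z in lborel. norm (ft t z) \<le> norm (Qf (fst z) * Qf (snd z))"
    proof (rule AE_I2)
      fix z :: "real \<times> real"
      obtain x y where z: "z = (x, y)" by (cases z)
      show "norm (ft t z) \<le> norm (Qf (fst z) * Qf (snd z))"
      proof (cases "x \<in> A \<and> y \<in> A")
        case True
        hence x: "0 < x" "x < 1" and y: "0 < y" "y < 1" unfolding A_def by auto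
        have w: "0 \<le> ((1 - v) / (1 + v)) ^ t \<and> ((1 - v) / (1 + v)) ^ t \<le> 1" if "0 < v" "v < 1" for v :: real
          using that by (auto intro!: power_le_one)
        have p0: "0 \<le> x ^ a * y ^ b * ((1 - x) / (1 + x)) ^ t * ((1 - y) / (1 + y)) ^ t"
          using x y w[OF x] w[OF y] by auto
        have p1: "x ^ a * y ^ b * ((1 - x) / (1 + x)) ^ t * ((1 - y) / (1 + y)) ^ t \<le> 1"
          using x y w[OF x] w[OF y] by (intro mult_le_one power_le_one) auto
        have "ft t z = x ^ a * y ^ b * ((1 - x) / (1 + x)) ^ t * ((1 - y) / (1 + y)) ^ t / (x + y)"
          unfolding ft_def z using True by simp
        hence "norm (ft t z) = x ^ a * y ^ b * ((1 - x) / (1 + x)) ^ t * ((1 - y) / (1 + y)) ^ t / (x + y)"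
          using p0 x y by simp
        also have "\<dots> \<le> 1 / (x + y)" using p1 x y by (intro divide_right_mono) auto
        also have "\<dots> \<le> x powr (-1/2) * y powr (-1/2)" by (rule inv_le_powr) (use x y in auto)
        also have "\<dots> = norm (Qf (fst z) * Qf (snd z))" unfolding z Qf_def using x y by simp
        finally show ?thesis .
      next
        case False
        hence "ft t z = 0" unfolding ft_def z by (auto simp: indicator_def)
        thus ?thesis by simp
      qed
    qed
  qed
  have "moment s (Suc t) i j = lebesgue_integral lborel (\<lambda>z. ft t z + (-2) * (h a (fst z) * h b (snd z)))"
    unfolding m pw ..
  also have "\<dots> = lebesgue_integral lborel (ft t) + lebesgue_integral lborel (\<lambda>z. (-2) * (h a (fst z) * h b (snd z)))"
    by (rule Bochner_Integration.integral_add) (use ftint PI(1) in auto)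
  also have "lebesgue_integral lborel (\<lambda>z. (-2) * (h a (fst z) * h b (snd z))) = (-2) * (lebesgue_integral lborel (h a) * lebesgue_integral lborel (h b))"
    using PI(2) by simp
  finally show ?thesis unfolding m g a_def b_def by simp
qed

lemma moment_shift: "moment (Suc s) t i j = moment s t (Suc i) (Suc j)"
  unfolding moment_def by simp


lemma moment_sym: "moment s t i j = moment s t j i"
proof -
  define A where "A = {0<..<1::real}"
  define F where "F = (\<lambda>z::real\<times>real. indicator (A \<times> A) z *\<^sub>R (fst z ^ (s + j) * snd z ^ (s + i) / (fst z + snd z) * ((1 - fst z) / (1 + fst z)) ^ t * ((1 - snd z) / (1 + snd z)) ^ t))"
  have AA: "A \<times> A \<in> sets (borel :: (real \<times> real) measure)"
    unfolding A_def by (rule borel_open) (auto intro: open_Times)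
  have Fm: "F \<in> borel_measurable borel"
    unfolding F_def
    by (rule borel_measurable_continuous_on_indicator[OF AA]) (auto simp: A_def mem_Times_iff intro!: continuous_intros add_pos_pos)
  have Fm': "F \<in> borel_measurable (lborel \<Otimes>\<^sub>M lborel)" using Fm by (simp add: lborel_prod)
  have "moment s t j i = lebesgue_integral (lborel \<Otimes>\<^sub>M lborel) F"
    unfolding moment_def set_lebesgue_integral_def F_def A_def by (simp add: lborel_prod)
  also have "\<dots> = (\<integral>(x,y). F (y,x) \<partial>(lborel \<Otimes>\<^sub>M lborel))"
    by (rule lborel_pair.integral_product_swap[OF Fm', symmetric])
  also have "\<dots> = moment s t i j"
    unfolding moment_def set_lebesgue_integral_def F_def A_def lborel_prod
    by (rule Bochner_Integration.integral_cong) (auto simp: indicator_def algebra_simps)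
  finally show ?thesis ..
qed

lemma detn_det: "detn n F = Determinant.det (Matrix.mat n n (\<lambda>(i,j). F i j))"
proof -
  have "Determinant.det (Matrix.mat n n (\<lambda>(i,j). F i j)) =
     (\<Sum>p | p permutes {0..<n}. of_int (sign p) * (\<Prod>i = 0..<n. Matrix.mat n n (\<lambda>(i,j). F i j) $$ (i, p i)))"
    by (rule det_def') simp
  also have "\<dots> = (\<Sum>p | p permutes {..<n}. of_int (sign p) * (\<Prod>i<n. F i (p i)))"
  proof (rule sum.cong)
    show "{p. p permutes {0..<n}} = {p. p permutes {..<n}}" by (simp add: atLeast0LessThan)
  next
    fix p assume "p \<in> {p. p permutes {..<n}}"
    hence p: "p permutes {..<n}" by simp
    have "\<And>i. i < n \<Longrightarrow> p i < n" using permutes_in_image[OF p] by auto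
    thus "of_int (sign p) * (\<Prod>i = 0..<n. Matrix.mat n n (\<lambda>(i,j). F i j) $$ (i, p i)) = of_int (sign p) * (\<Prod>i<n. F i (p i))"
      by (simp add: atLeast0LessThan)
  qed
  finally show ?thesis unfolding detn_def by simp
qed

lemma det_perm_rows:
  assumes p: "p permutes {0..<n}"
  shows "Determinant.det (Matrix.mat n n (\<lambda>(i,j). f (p i) j)) = of_int (sign p) * Determinant.det (Matrix.mat n n (\<lambda>(i,j). f i j))"
proof -
  have "Matrix.mat n n (\<lambda>(i,j). f (p i) j) = Matrix.mat n n (\<lambda>(i,j). Matrix.mat n n (\<lambda>(i,j). f i j) $$ (p i, j))"
    using permutes_in_image[OF p] by (intro eq_matI) auto
  thus ?thesis using det_permute_rows[OF _ p, of "Matrix.mat n n (\<lambda>(i,j). f i j)"] by simp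
qed

lemma det_perm_cols:
  assumes p: "p permutes {0..<n}"
  shows "Determinant.det (Matrix.mat n n (\<lambda>(i,j). f i (p j))) = of_int (sign p) * Determinant.det (Matrix.mat n n (\<lambda>(i,j). f i j))"
proof -
  have t1: "Determinant.det (Matrix.mat n n (\<lambda>(i,j). f i (p j))) = Determinant.det (Matrix.mat n n (\<lambda>(i,j). f j (p i)))"
    by (subst det_transpose[symmetric]) (auto intro!: arg_cong[where f=Determinant.det] eq_matI)
  have t2: "Determinant.det (Matrix.mat n n (\<lambda>(i,j). f i j)) = Determinant.det (Matrix.mat n n (\<lambda>(i,j). f j i))"
    by (subst det_transpose[symmetric]) (auto intro!: arg_cong[where f=Determinant.det] eq_matI)
  show ?thesis unfolding t1 t2 using det_perm_rows[OF p, of "\<lambda>i j. f j i"] by simp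
qed

lemma det_perm_both:
  assumes p: "p permutes {0..<n}"
  shows "Determinant.det (Matrix.mat n n (\<lambda>(i,j). f (p i) (p j))) = Determinant.det (Matrix.mat n n (\<lambda>(i,j). f i j))"
proof -
  have ss: "sign p * sign p = (1::int)" by (simp add: sign_def)
  have s: "(of_int (sign p) :: 'a) * of_int (sign p) = 1"
    by (metis ss of_int_mult of_int_1)
  show ?thesis
    using det_perm_rows[OF p, of "\<lambda>i j. f i (p j)"] det_perm_cols[OF p, of f]
    by (simp add: mult.assoc[symmetric] s)
qed

lemma det_transpose_fun:
  "Determinant.det (Matrix.mat n n (\<lambda>(i,j). f j i)) = Determinant.det (Matrix.mat n n (\<lambda>(i,j). f i j))"
  by (subst det_transpose[symmetric]) (auto intro!: arg_cong[where f=Determinant.det] eq_matI)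

lemma schur_adj:
  fixes B :: "'a::idom mat"
  assumes B: "B \<in> carrier_mat m m" and U: "U \<in> carrier_mat m k"
    and V: "V \<in> carrier_mat k m" and W: "W \<in> carrier_mat k k"
    and d0: "Determinant.det B \<noteq> 0"
  shows "Determinant.det B ^ k * Determinant.det (four_block_mat B U V W) =
         Determinant.det B * Determinant.det ((Determinant.det B \<cdot>\<^sub>m 1\<^sub>m k) * W + (- (V * adj_mat B)) * U)"
proof -
  define d where "d = Determinant.det B"
  define A where "A = adj_mat B"
  have A: "A \<in> carrier_mat m m" and AB: "A * B = d \<cdot>\<^sub>m 1\<^sub>m m" using adj_mat[OF B] unfolding A_def d_def by auto
  define L where "L = four_block_mat A (0\<^sub>m m k) (- (V * A)) (d \<cdot>\<^sub>m 1\<^sub>m k)"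
  define S where "S = (d \<cdot>\<^sub>m 1\<^sub>m k) * W + (- (V * A)) * U"
  have VA: "V * A \<in> carrier_mat k m" using V A by auto
  have S: "S \<in> carrier_mat k k" unfolding S_def using V A U W by auto
  have LM: "L * four_block_mat B U V W = four_block_mat (d \<cdot>\<^sub>m 1\<^sub>m m) (A * U) (0\<^sub>m k m) S"
  proof -
    have "L * four_block_mat B U V W = four_block_mat (A * B + 0\<^sub>m m k * V) (A * U + 0\<^sub>m m k * W)
        ((- (V * A)) * B + (d \<cdot>\<^sub>m 1\<^sub>m k) * V) ((- (V * A)) * U + (d \<cdot>\<^sub>m 1\<^sub>m k) * W)"
      unfolding L_def by (rule mult_four_block_mat) (use A B U V W VA in auto)
    also have "A * B + 0\<^sub>m m k * V = d \<cdot>\<^sub>m 1\<^sub>m m" using AB V by simp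
    also have "A * U + 0\<^sub>m m k * W = A * U" using A U W by simp
    also have "(- (V * A)) * B + (d \<cdot>\<^sub>m 1\<^sub>m k) * V = 0\<^sub>m k m"
    proof -
      have "(- (V * A)) * B = - (V * A * B)" using VA B by (intro uminus_mult_left_mat) auto
      also have "V * A * B = V * (A * B)" using V A B by (simp add: assoc_mult_mat)
      also have "\<dots> = d \<cdot>\<^sub>m V" using V AB by (simp add: mult_smult_distrib[of V k m "1\<^sub>m m" m])
      finally have 1: "(- (V * A)) * B = - (d \<cdot>\<^sub>m V)" .
      have 2: "(d \<cdot>\<^sub>m 1\<^sub>m k) * V = d \<cdot>\<^sub>m V" using V by (simp add: mult_smult_assoc_mat[of "1\<^sub>m k" k k V m])
      show ?thesis unfolding 1 2 using V by (intro uminus_l_inv_mat) auto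
    qed
    also have "(- (V * A)) * U + (d \<cdot>\<^sub>m 1\<^sub>m k) * W = S" unfolding S_def using V A U W
      by (intro comm_add_mat) auto
    finally show ?thesis .
  qed
  have detLM: "Determinant.det (L * four_block_mat B U V W) = d ^ m * Determinant.det S"
    unfolding LM by (subst det_four_block_mat_lower_left_zero[of _ m _ k]) (use A U S in \<open>auto simp: det_smult\<close>)
  have detL: "Determinant.det L = Determinant.det A * d ^ k"
    unfolding L_def by (subst det_four_block_mat_upper_right_zero[of _ m _ k]) (use A VA in \<open>auto simp: det_smult\<close>)
  have M: "four_block_mat B U V W \<in> carrier_mat (m + k) (m + k)" using B U V W by auto
  have L: "L \<in> carrier_mat (m + k) (m + k)" unfolding L_def using A VA by auto
  have "Determinant.det L * Determinant.det (four_block_mat B U V W) = d ^ m * Determinant.det S"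
    using det_mult[OF L M] detLM by simp
  hence e1: "Determinant.det A * d ^ k * Determinant.det (four_block_mat B U V W) = d ^ m * Determinant.det S"
    using detL by simp
  have e2: "Determinant.det A * d = d ^ m"
    using det_mult[OF A B] AB by (simp add: det_smult d_def)
  have "Determinant.det A \<noteq> 0" using e2 d0 d_def by auto
  moreover have "Determinant.det A * (d ^ k * Determinant.det (four_block_mat B U V W)) = Determinant.det A * (d * Determinant.det S)"
    using e1 e2 by (simp add: mult.assoc[symmetric])
  ultimately show ?thesis unfolding S_def A_def d_def by simp
qed

definition EE :: "(nat \<Rightarrow> nat \<Rightarrow> 'a::comm_ring_1) \<Rightarrow> nat \<Rightarrow> nat \<Rightarrow> nat \<Rightarrow> 'a" where
  "EE G m a b = Determinant.det (Matrix.mat m m (\<lambda>(i,j). G i j)) * G a b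
     - (\<Sum>q<m. (\<Sum>p<m. G a p * adj_mat (Matrix.mat m m (\<lambda>(i,j). G i j)) $$ (p,q)) * G q b)"

lemma schur_fun:
  fixes G :: "nat \<Rightarrow> nat \<Rightarrow> 'a::idom" and r c :: "nat \<Rightarrow> nat"
  assumes d0: "Determinant.det (Matrix.mat m m (\<lambda>(i,j). G i j)) \<noteq> 0"
  shows "Determinant.det (Matrix.mat m m (\<lambda>(i,j). G i j)) ^ k *
      Determinant.det (Matrix.mat (m+k) (m+k) (\<lambda>(i,j). G (if i<m then i else r (i-m)) (if j<m then j else c (j-m))))
    = Determinant.det (Matrix.mat m m (\<lambda>(i,j). G i j)) * Determinant.det (Matrix.mat k k (\<lambda>(i,j). EE G m (r i) (c j)))"
proof -
  define B where "B = Matrix.mat m m (\<lambda>(i,j). G i j)"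
  define U where "U = Matrix.mat m k (\<lambda>(i,j). G i (c j))"
  define V where "V = Matrix.mat k m (\<lambda>(i,j). G (r i) j)"
  define W where "W = Matrix.mat k k (\<lambda>(i,j). G (r i) (c j))"
  have B: "B \<in> carrier_mat m m" and U: "U \<in> carrier_mat m k" and V: "V \<in> carrier_mat k m" and W: "W \<in> carrier_mat k k"
    unfolding B_def U_def V_def W_def by auto
  have M: "four_block_mat B U V W = Matrix.mat (m+k) (m+k) (\<lambda>(i,j). G (if i<m then i else r (i-m)) (if j<m then j else c (j-m)))"
    by (rule eq_matI) (auto simp: B_def U_def V_def W_def index_mat_four_block)
  have S: "(Determinant.det B \<cdot>\<^sub>m 1\<^sub>m k) * W + (- (V * adj_mat B)) * U = Matrix.mat k k (\<lambda>(i,j). EE G m (r i) (c j))"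
  proof (rule eq_matI)
    fix i j assume i: "i < dim_row (Matrix.mat k k (\<lambda>(i,j). EE G m (r i) (c j)))" and j: "j < dim_col (Matrix.mat k k (\<lambda>(i,j). EE G m (r i) (c j)))"
    have A: "adj_mat B \<in> carrier_mat m m" using adj_mat[OF B] by auto
    have 1: "((Determinant.det B \<cdot>\<^sub>m 1\<^sub>m k) * W) $$ (i,j) = Determinant.det B * G (r i) (c j)"
      using i j W by (simp add: mult_smult_assoc_mat[of "1\<^sub>m k" k k W k]) (simp add: W_def)
    have 2: "((- (V * adj_mat B)) * U) $$ (i,j) = - (\<Sum>q<m. (\<Sum>p<m. G (r i) p * adj_mat B $$ (p,q)) * G q (c j))"
      using i j A V U by (simp add: index_mult_mat scalar_prod_def V_def U_def atLeast0LessThan)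
    show "((Determinant.det B \<cdot>\<^sub>m 1\<^sub>m k) * W + (- (V * adj_mat B)) * U) $$ (i, j) = Matrix.mat k k (\<lambda>(i,j). EE G m (r i) (c j)) $$ (i, j)"
      using i j A V U W 1 2 by (simp add: EE_def B_def)
  qed (use U V in auto)
  have "Determinant.det B ^ k * Determinant.det (four_block_mat B U V W) =
         Determinant.det B * Determinant.det ((Determinant.det B \<cdot>\<^sub>m 1\<^sub>m k) * W + (- (V * adj_mat B)) * U)"
    using schur_adj[OF B U V W] d0 unfolding B_def by simp
  thus ?thesis unfolding M S unfolding B_def .
qed

lemma det2: "Determinant.det (Matrix.mat 2 2 f) = f (0,0) * f (1,1) - f (0,1) * f (1,0)"
proof -
  have "Determinant.det (Matrix.mat 2 2 f) = (\<Sum>j<2. Matrix.mat 2 2 f $$ (0,j) * cofactor (Matrix.mat 2 2 f) 0 j)"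
    by (rule laplace_expansion_row) auto
  also have "\<dots> = f (0,0) * f (1,1) - f (0,1) * f (1,0)"
    by (simp add: numeral_2_eq_2 cofactor_def det_single mat_delete_def)
  finally show ?thesis .
qed

definition M1 :: "(nat \<Rightarrow> nat \<Rightarrow> 'a) \<Rightarrow> nat \<Rightarrow> nat \<Rightarrow> nat \<Rightarrow> 'a mat" where
  "M1 G m a b = Matrix.mat (m+1) (m+1) (\<lambda>(i,j). G (if i<m then i else a) (if j<m then j else b))"

lemma jacobi_idom:
  fixes G :: "nat \<Rightarrow> nat \<Rightarrow> 'a::idom"
  assumes d0: "Determinant.det (Matrix.mat m m (\<lambda>(i,j). G i j)) \<noteq> 0"
  shows "Determinant.det (Matrix.mat m m (\<lambda>(i,j). G i j)) * Determinant.det (Matrix.mat (m+2) (m+2) (\<lambda>(i,j). G i j))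
     = Determinant.det (M1 G m m m) * Determinant.det (M1 G m (m+1) (m+1)) - Determinant.det (M1 G m m (m+1)) * Determinant.det (M1 G m (m+1) m)"
proof -
  define d where "d = Determinant.det (Matrix.mat m m (\<lambda>(i,j). G i j))"
  have one: "Determinant.det (M1 G m a b) = EE G m a b" for a b
  proof -
    have "d ^ 1 * Determinant.det (M1 G m a b) = d * Determinant.det (Matrix.mat 1 1 (\<lambda>(i,j). EE G m a b))"
      using schur_fun[OF d0, of 1 "\<lambda>_. a" "\<lambda>_. b"] unfolding d_def M1_def by simp
    also have "Determinant.det (Matrix.mat 1 1 (\<lambda>(i,j). EE G m a b)) = EE G m a b"
      by (subst det_single) auto
    finally show ?thesis using d0 d_def by simp
  qed
  have "d ^ 2 * Determinant.det (Matrix.mat (m+2) (m+2) (\<lambda>(i,j). G (if i<m then i else m + (i-m)) (if j<m then j else m + (j-m))))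
       = d * Determinant.det (Matrix.mat 2 2 (\<lambda>(i,j). EE G m (m+i) (m+j)))"
    using schur_fun[OF d0, of 2 "\<lambda>i. m+i" "\<lambda>i. m+i"] unfolding d_def by simp
  also have "Matrix.mat (m+2) (m+2) (\<lambda>(i,j). G (if i<m then i else m + (i-m)) (if j<m then j else m + (j-m)))
      = Matrix.mat (m+2) (m+2) (\<lambda>(i,j). G i j)"
    by (rule eq_matI) auto
  also have "Determinant.det (Matrix.mat 2 2 (\<lambda>(i,j). EE G m (m+i) (m+j))) =
     EE G m m m * EE G m (m+1) (m+1) - EE G m m (m+1) * EE G m (m+1) m"
    by (simp add: det2)
  finally have "d * (d * Determinant.det (Matrix.mat (m+2) (m+2) (\<lambda>(i,j). G i j))) = d * (EE G m m m * EE G m (m+1) (m+1) - EE G m m (m+1) * EE G m (m+1) m)"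
    by (simp add: power2_eq_square mult.assoc)
  hence "d * Determinant.det (Matrix.mat (m+2) (m+2) (\<lambda>(i,j). G i j)) = EE G m m m * EE G m (m+1) (m+1) - EE G m m (m+1) * EE G m (m+1) m"
    using d0 d_def by simp
  thus ?thesis unfolding one d_def .
qed

lemma jacobi_real:
  fixes G :: "nat \<Rightarrow> nat \<Rightarrow> real"
  shows "Determinant.det (Matrix.mat m m (\<lambda>(i,j). G i j)) * Determinant.det (Matrix.mat (m+2) (m+2) (\<lambda>(i,j). G i j))
     = Determinant.det (M1 G m m m) * Determinant.det (M1 G m (m+1) (m+1)) - Determinant.det (M1 G m m (m+1)) * Determinant.det (M1 G m (m+1) m)"
proof -
  define GX where "GX = (\<lambda>i j. [: G i j :] + (if i = j then [:0,1:] else 0))"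
  have cm: "Matrix.mat m m (\<lambda>(i,j). GX i j) = char_poly_matrix (Matrix.mat m m (\<lambda>(i,j). - G i j))"
    unfolding char_poly_matrix_def GX_def by (rule eq_matI) auto
  have "coeff (char_poly (Matrix.mat m m (\<lambda>(i,j). - G i j))) m = 1"
    using degree_monic_char_poly[of "Matrix.mat m m (\<lambda>(i,j). - G i j)" m] by auto
  hence d0: "Determinant.det (Matrix.mat m m (\<lambda>(i,j). GX i j)) \<noteq> 0"
    unfolding cm char_poly_def[symmetric] by auto
  note J = jacobi_idom[OF d0]
  have cr: "Ring_Hom.comm_ring_hom (\<lambda>p::real poly. poly p 0)" by unfold_locales auto
  have ev: "poly (Determinant.det (Matrix.mat n n (F :: nat \<times> nat \<Rightarrow> real poly))) 0 = Determinant.det (Matrix.mat n n (\<lambda>ij. poly (F ij) 0))" for n F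
  proof -
    have "poly (Determinant.det (Matrix.mat n n F)) 0 = Determinant.det (map_mat (\<lambda>p. poly p 0) (Matrix.mat n n F))"
      using Determinant.comm_ring_hom.hom_det[OF cr, of "Matrix.mat n n F"] by simp
    also have "map_mat (\<lambda>p. poly p 0) (Matrix.mat n n F) = Matrix.mat n n (\<lambda>ij. poly (F ij) 0)"
      by (rule eq_matI) auto
    finally show ?thesis .
  qed
  have pg: "poly (GX a b) 0 = G a b" for a b unfolding GX_def by simp
  from arg_cong[OF J, of "\<lambda>p. poly p 0"] show ?thesis
    unfolding poly_mult poly_diff M1_def ev case_prod_unfold
    by (simp add: pg)
qed

lemma rho_permutes:
  assumes "k = m + 1 \<or> k = m + 2"
  shows "(\<lambda>i. if i < m then Suc i else if i = m then 0 else i) permutes {0..<k}"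
proof (rule bij_imp_permutes)
  let ?r = "\<lambda>i::nat. if i < m then Suc i else if i = m then 0 else i"
  let ?s = "\<lambda>j::nat. if j = 0 then m else if j \<le> m then j - 1 else j"
  show "bij_betw ?r {0..<k} {0..<k}"
    by (rule bij_betw_byWitness[where f'="?s"]) (use assms in auto)
  show "\<And>x. x \<notin> {0..<k} \<Longrightarrow> ?r x = x" using assms by auto
qed

lemma jacobi_detn:
  fixes F :: "nat \<Rightarrow> nat \<Rightarrow> real"
  shows "detn (m+1) F * detn (m+1) (\<lambda>i j. F (Suc i) (Suc j)) - detn (m+2) F * detn m (\<lambda>i j. F (Suc i) (Suc j))
       = detn (m+1) (\<lambda>i j. F (Suc i) j) * detn (m+1) (\<lambda>i j. F i (Suc j))"
proof -
  define r where "r = (\<lambda>i::nat. if i < m then Suc i else if i = m then 0 else i)"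
  have r1: "r permutes {0..<m+1}" and r2: "r permutes {0..<m+2}" unfolding r_def by (rule rho_permutes; simp)+
  define G where "G = (\<lambda>i j. F (r i) (r j))"
  note J = jacobi_real[of m G]
  have e1: "Determinant.det (Matrix.mat m m (\<lambda>(i,j). G i j)) = detn m (\<lambda>i j. F (Suc i) (Suc j))"
    unfolding detn_det G_def r_def by (rule arg_cong[where f=Determinant.det]) (rule eq_matI, auto)
  have e2: "Determinant.det (Matrix.mat (m+2) (m+2) (\<lambda>(i,j). G i j)) = detn (m+2) F"
    unfolding detn_det G_def using det_perm_both[OF r2, of F] by simp
  have e3: "Determinant.det (M1 G m m m) = detn (m+1) F"
  proof -
    have "M1 G m m m = Matrix.mat (m+1) (m+1) (\<lambda>(i,j). F (r i) (r j))"
      unfolding M1_def G_def by (rule eq_matI) (auto simp: less_Suc_eq)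
    thus ?thesis unfolding detn_det using det_perm_both[OF r1, of F] by simp
  qed
  have e4: "Determinant.det (M1 G m (m+1) (m+1)) = detn (m+1) (\<lambda>i j. F (Suc i) (Suc j))"
    unfolding detn_det M1_def G_def r_def by (rule arg_cong[where f=Determinant.det]) (rule eq_matI, auto simp: less_Suc_eq)
  have e5: "Determinant.det (M1 G m m (m+1)) = of_int (sign r) * detn (m+1) (\<lambda>i j. F i (Suc j))"
  proof -
    have "M1 G m m (m+1) = Matrix.mat (m+1) (m+1) (\<lambda>(i,j). F (r i) (Suc j))"
      unfolding M1_def G_def by (rule eq_matI) (auto simp: less_Suc_eq r_def)
    thus ?thesis unfolding detn_det using det_perm_rows[OF r1, of "\<lambda>i j. F i (Suc j)"] by simp
  qed
  have e6: "Determinant.det (M1 G m (m+1) m) = of_int (sign r) * detn (m+1) (\<lambda>i j. F (Suc i) j)"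
  proof -
    have "M1 G m (m+1) m = Matrix.mat (m+1) (m+1) (\<lambda>(i,j). F (Suc i) (r j))"
      unfolding M1_def G_def by (rule eq_matI) (auto simp: less_Suc_eq r_def)
    thus ?thesis unfolding detn_det using det_perm_cols[OF r1, of "\<lambda>i j. F (Suc i) j"] by simp
  qed
  have ss: "(of_int (sign r) :: real) * of_int (sign r) = 1"
    by (metis of_int_mult of_int_1 sign_def mult_minus_left mult_1_left minus_minus)
  have "detn m (\<lambda>i j. F (Suc i) (Suc j)) * detn (m+2) F = detn (m+1) F * detn (m+1) (\<lambda>i j. F (Suc i) (Suc j))
     - (of_int (sign r) * of_int (sign r)) * (detn (m+1) (\<lambda>i j. F i (Suc j)) * detn (m+1) (\<lambda>i j. F (Suc i) j))"
    using J unfolding e1 e2 e3 e4 e5 e6 by (simp add: algebra_simps)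
  thus ?thesis unfolding ss by (simp add: algebra_simps)
qed

lemma detn_rank1_affine:
  fixes F :: "nat \<Rightarrow> nat \<Rightarrow> real" and u v :: "nat \<Rightarrow> real"
  shows "\<exists>\<alpha> \<beta>. \<forall>c. detn k (\<lambda>i j. F i j + c * u i * v j) = \<alpha> + c * \<beta>"
proof -
  define Gc where "Gc = (\<lambda>c::real. Matrix.mat (Suc k) (Suc k) (\<lambda>(i,j). if i < k then (if j < k then F i j else u i) else (if j < k then - c * v j else 1)))"
  define E where "E = Matrix.mat (Suc k) (Suc k) (\<lambda>(i,j). if i = j then 1 else if j = k then - u i else (0::real))"
  define H where "H = (\<lambda>c::real. Matrix.mat (Suc k) (Suc k) (\<lambda>(i,j). if i < k then (if j < k then F i j + c * u i * v j else 0) else (if j < k then - c * v j else 1)))"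
  have EG: "E * Gc c = H c" for c
  proof (rule eq_matI)
    fix i j assume i: "i < dim_row (H c)" and j: "j < dim_col (H c)"
    hence i': "i < Suc k" and j': "j < Suc k" unfolding H_def by auto
    have "(E * Gc c) $$ (i,j) = (\<Sum>l = 0..<Suc k. E $$ (i,l) * Gc c $$ (l,j))"
      using i' j' by (simp add: E_def Gc_def scalar_prod_def)
    also have "\<dots> = (\<Sum>l<k. E $$ (i,l) * Gc c $$ (l,j)) + E $$ (i,k) * Gc c $$ (k,j)"
      by (simp add: atLeast0LessThan)
    also have "\<dots> = H c $$ (i,j)"
    proof (cases "i < k")
      case True
      have "(\<Sum>l<k. E $$ (i,l) * Gc c $$ (l,j)) = (\<Sum>l<k. if l = i then Gc c $$ (i,j) else 0)"
        by (rule sum.cong) (use True in \<open>auto simp: E_def\<close>)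
      also have "\<dots> = Gc c $$ (i,j)" using True by simp
      finally show ?thesis using True i' j' by (auto simp: E_def Gc_def H_def algebra_simps)
    next
      case False
      hence ik: "i = k" using i' by simp
      have "(\<Sum>l<k. E $$ (i,l) * Gc c $$ (l,j)) = 0"
        by (rule sum.neutral) (use ik in \<open>auto simp: E_def\<close>)
      thus ?thesis using ik j' by (auto simp: E_def Gc_def H_def)
    qed
    finally show "(E * Gc c) $$ (i,j) = H c $$ (i,j)" .
  qed (auto simp: E_def H_def Gc_def)
  have detE: "Determinant.det E = 1"
  proof -
    have "Determinant.det E = prod_list (diag_mat E)"
      by (rule det_upper_triangular) (auto simp: E_def upper_triangular_def)
    also have "diag_mat E = map (\<lambda>i. 1) [0..<Suc k]"
      unfolding diag_mat_def by (rule map_cong) (auto simp: E_def)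
    finally have "Determinant.det E = prod_list (map (\<lambda>i::nat. 1::real) [0..<Suc k])" .
    moreover have pl: "prod_list (map (\<lambda>i::nat. 1::real) xs) = 1" for xs by (induct xs) auto
    ultimately show ?thesis by (simp only: pl)
  qed
  have detH: "Determinant.det (H c) = detn k (\<lambda>i j. F i j + c * u i * v j)" for c
  proof -
    have "Determinant.det (H c) = (\<Sum>i<Suc k. H c $$ (i,k) * cofactor (H c) i k)"
      by (rule laplace_expansion_column) (auto simp: H_def)
    also have "\<dots> = (\<Sum>i<k. H c $$ (i,k) * cofactor (H c) i k) + H c $$ (k,k) * cofactor (H c) k k"
      by simp
    also have "(\<Sum>i<k. H c $$ (i,k) * cofactor (H c) i k) = 0"
      by (rule sum.neutral) (auto simp: H_def)
    also have "H c $$ (k,k) = 1" by (simp add: H_def)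
    also have "cofactor (H c) k k = Determinant.det (mat_delete (H c) k k)"
      by (simp add: cofactor_def)
    also have "mat_delete (H c) k k = Matrix.mat k k (\<lambda>(i,j). F i j + c * u i * v j)"
      by (rule eq_matI) (auto simp: mat_delete_def H_def)
    finally show ?thesis by (simp add: detn_det)
  qed
  have Gc_carrier: "Gc c \<in> carrier_mat (Suc k) (Suc k)" for c by (simp add: Gc_def)
  have E_carrier: "E \<in> carrier_mat (Suc k) (Suc k)" by (simp add: E_def)
  have del: "mat_delete (Gc c) k j = mat_delete (Gc 0) k j" for c j
    by (rule eq_matI) (auto simp: mat_delete_def Gc_def)
  define cf where "cf = (\<lambda>j. cofactor (Gc 0) k j)"
  have detG: "Determinant.det (Gc c) = cf k + c * (\<Sum>j<k. - v j * cf j)" for c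
  proof -
    have "Determinant.det (Gc c) = (\<Sum>j<Suc k. Gc c $$ (k,j) * cofactor (Gc c) k j)"
      by (rule laplace_expansion_row) (auto simp: Gc_def)
    also have "\<dots> = (\<Sum>j<Suc k. Gc c $$ (k,j) * cf j)"
    proof (rule sum.cong)
      fix j show "Gc c $$ (k,j) * cofactor (Gc c) k j = Gc c $$ (k,j) * cf j"
        unfolding cf_def cofactor_def del[of c j] ..
    qed simp
    also have "\<dots> = (\<Sum>j<k. Gc c $$ (k,j) * cf j) + Gc c $$ (k,k) * cf k" by simp
    also have "(\<Sum>j<k. Gc c $$ (k,j) * cf j) = c * (\<Sum>j<k. - v j * cf j)"
      unfolding sum_distrib_left by (rule sum.cong) (auto simp: Gc_def)
    also have "Gc c $$ (k,k) = 1" by (simp add: Gc_def)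
    finally show ?thesis by simp
  qed
  show ?thesis
  proof (intro exI allI)
    fix c
    have "detn k (\<lambda>i j. F i j + c * u i * v j) = Determinant.det (E * Gc c)" using detH EG by simp
    also have "\<dots> = Determinant.det (Gc c)" using det_mult[OF E_carrier Gc_carrier] detE by simp
    finally show "detn k (\<lambda>i j. F i j + c * u i * v j) = cf k + c * (\<Sum>j<k. - v j * cf j)" using detG by simp
  qed
qed

lemma main_alg:
  fixes P :: "nat \<Rightarrow> nat \<Rightarrow> real" and u :: "nat \<Rightarrow> real" and m :: nat and c :: real
  assumes sym: "\<And>i j. P i j = P j i"
  defines "Q \<equiv> \<lambda>i j. P i j + c * u i * u j"
  shows "4 * (detn (m+1) (\<lambda>i j. P (Suc i) (Suc j)) * detn (m+1) P - detn (m+2) P * detn m (\<lambda>i j. P (Suc i) (Suc j)))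
     * (detn (m+1) (\<lambda>i j. Q (Suc i) (Suc j)) * detn (m+1) Q - detn (m+2) Q * detn m (\<lambda>i j. Q (Suc i) (Suc j)))
   = (detn (m+1) (\<lambda>i j. P (Suc i) (Suc j)) * detn (m+1) Q + detn (m+1) (\<lambda>i j. Q (Suc i) (Suc j)) * detn (m+1) P
      - detn (m+2) Q * detn m (\<lambda>i j. P (Suc i) (Suc j)) - detn (m+2) P * detn m (\<lambda>i j. Q (Suc i) (Suc j)))^2"
proof -
  define Fx where "Fx = (\<lambda>x::real. \<lambda>i j. P i j + x * u i * u j)"
  have P0: "Fx 0 = P" unfolding Fx_def by simp
  have Qc: "Fx c = Q" unfolding Fx_def Q_def by simp
  obtain a0 a1 where A: "\<And>x. detn (m+1) (Fx x) = a0 + x * a1"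
    using detn_rank1_affine[of "m+1" P u u] unfolding Fx_def by blast
  obtain b0 b1 where B: "\<And>x. detn (m+1) (\<lambda>i j. Fx x (Suc i) (Suc j)) = b0 + x * b1"
    using detn_rank1_affine[of "m+1" "\<lambda>i j. P (Suc i) (Suc j)" "\<lambda>i. u (Suc i)" "\<lambda>i. u (Suc i)"] unfolding Fx_def by blast
  obtain c0 c1 where C: "\<And>x. detn (m+2) (Fx x) = c0 + x * c1"
    using detn_rank1_affine[of "m+2" P u u] unfolding Fx_def by blast
  obtain d0 d1 where D: "\<And>x. detn m (\<lambda>i j. Fx x (Suc i) (Suc j)) = d0 + x * d1"
    using detn_rank1_affine[of m "\<lambda>i j. P (Suc i) (Suc j)" "\<lambda>i. u (Suc i)" "\<lambda>i. u (Suc i)"] unfolding Fx_def by blast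
  obtain s0 s1 where S: "\<And>x. detn (m+1) (\<lambda>i j. Fx x (Suc i) j) = s0 + x * s1"
    using detn_rank1_affine[of "m+1" "\<lambda>i j. P (Suc i) j" "\<lambda>i. u (Suc i)" u] unfolding Fx_def by blast
  have T: "detn (m+1) (\<lambda>i j. Fx x i (Suc j)) = s0 + x * s1" for x
  proof -
    have "detn (m+1) (\<lambda>i j. Fx x i (Suc j)) = Determinant.det (Matrix.mat (m+1) (m+1) (\<lambda>(i,j). (\<lambda>i j. Fx x (Suc i) j) j i))"
      unfolding detn_det Fx_def using sym by (simp add: mult.commute mult.left_commute)
    also have "\<dots> = detn (m+1) (\<lambda>i j. Fx x (Suc i) j)"
      unfolding detn_det by (rule det_transpose_fun)
    finally show ?thesis using S by simp
  qed
  have J: "(a0 + x * a1) * (b0 + x * b1) - (c0 + x * c1) * (d0 + x * d1) = (s0 + x * s1) * (s0 + x * s1)" for x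
    using jacobi_detn[of m "Fx x"] unfolding A B C D S T by (simp add: add.commute)
  have J0: "a0 * b0 - c0 * d0 = s0 * s0" using J[of 0] by simp
  have J1: "a0 * b1 + a1 * b0 - c0 * d1 - c1 * d0 = 2 * s0 * s1"
    using J[of 1] J[of "-1"] by (simp add: algebra_simps)
  have Jc: "(a0 + c * a1) * (b0 + c * b1) - (c0 + c * c1) * (d0 + c * d1) = (s0 + c * s1) * (s0 + c * s1)" by (rule J)
  have mid: "b0 * (a0 + c * a1) + (b0 + c * b1) * a0 - (c0 + c * c1) * d0 - c0 * (d0 + c * d1)
      = 2 * (a0 * b0 - c0 * d0) + c * (a0 * b1 + a1 * b0 - c0 * d1 - c1 * d0)" by (simp add: algebra_simps)
  have "4 * (b0 * a0 - c0 * d0) * ((b0 + c * b1) * (a0 + c * a1) - (c0 + c * c1) * (d0 + c * d1))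
      = (b0 * (a0 + c * a1) + (b0 + c * b1) * a0 - (c0 + c * c1) * d0 - c0 * (d0 + c * d1))^2"
  proof -
    have l: "4 * (b0 * a0 - c0 * d0) * ((b0 + c * b1) * (a0 + c * a1) - (c0 + c * c1) * (d0 + c * d1))
       = 4 * (s0 * s0) * ((s0 + c * s1) * (s0 + c * s1))"
      using J0 Jc by (simp add: mult.commute)
    have r: "b0 * (a0 + c * a1) + (b0 + c * b1) * a0 - (c0 + c * c1) * d0 - c0 * (d0 + c * d1) = 2 * s0 * (s0 + c * s1)"
      unfolding mid J0 J1 by (simp add: algebra_simps)
    show ?thesis unfolding l r by (simp add: power2_eq_square algebra_simps)
  qed
  thus ?thesis
    using A[of 0] A[of c] B[of 0] B[of c] C[of 0] C[of c] D[of 0] D[of c] unfolding P0 Qc by simp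
qed

theorem theorem3p4:
  fixes n s t :: nat
  assumes "n \<ge> 1"
  shows "4 * (tau n (s+1) t * tau n s t - tau (n+1) s t * tau (n-1) (s+1) t)
           * (tau n (s+1) (t+1) * tau n s (t+1) - tau (n+1) s (t+1) * tau (n-1) (s+1) (t+1))
         = (tau n (s+1) t * tau n s (t+1) + tau n (s+1) (t+1) * tau n s t
            - tau (n+1) s (t+1) * tau (n-1) (s+1) t - tau (n+1) s t * tau (n-1) (s+1) (t+1))^2"
proof -
  obtain m where n: "n = m + 1" using assms by (metis le_add_diff_inverse2)
  define P where "P = (\<lambda>i j. moment s t i j)"
  define Q where "Q = (\<lambda>i j. P i j + (-2) * gm s t i * gm s t j)"
  have sym: "\<And>i j. P i j = P j i" unfolding P_def by (rule moment_sym)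
  have mP: "moment s t = P" unfolding P_def by simp
  have mP1: "moment (s+1) t = (\<lambda>i j. P (Suc i) (Suc j))"
    unfolding P_def by (simp add: moment_shift[symmetric])
  have mQ: "moment s (t+1) = Q"
    unfolding Q_def P_def by (intro ext) (simp add: moment_step)
  have mQ1: "moment (s+1) (t+1) = (\<lambda>i j. Q (Suc i) (Suc j))"
    unfolding mQ[symmetric] by (intro ext) (simp add: moment_shift)
  have nn: "n + 1 = m + 2" "n - 1 = m" using n by auto
  show ?thesis
    unfolding tau_def mP mP1 mQ mQ1 nn unfolding n Q_def
    using main_alg[of P m "-2" "gm s t", OF sym] by simp
qed

end
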